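(* Let $(V,E)$ be a task hypergraph, let $R \subseteq V$ be the set of its initial vertices, and let $W \subseteq V \setminus R$. Then the relation $\mathcal{R} \subseteq \mathrm{Dom}(R)\times\mathrm{Dom}(W)$ defined by $$\exists v_1 \in \mathrm{Dom}(t_1)\cdots\exists v_m\in\mathrm{Dom}(t_m),\; e_1(R_1,W_1)\wedge\cdots\wedge e_n(R_n,W_n),$$ where $\{v_1,\dots,v_m\} = V\setminus(R\cup W)$ with types $t_1,\dots,t_m$ and $\{e_1,\dots,e_n\}=E$ (each $e_k$ a task with read set $R_k$ and write set $W_k$), is total: for every $r\in\mathrm{Dom}(R)$ there exists $w\in\mathrm{Dom}(W)$ with $(r,w)\in\mathcal{R}$. In other words, every relation in $\mathrm{TG}(R,W)$ is total.
   Context: Variables are typed; each type $t$ has a domain $\mathrm{Dom}(t)$ (e.g. $\mathrm{Dom}(\mathtt{unit})=\{()\}$, $\mathrm{Dom}(\mathtt{bool})=\{\mathrm{true},\mathrm{false}\}$, $\mathrm{Dom}(\mathtt{int})=\mathbb{Z}$). For a finite set of variables $V$, $\mathrm{Dom}(V)=\prod_{v\in V}\mathrm{Dom}(t_v)$ if $V\neq\emptyset$ and $\{()\}$ if $V=\emptyset$. A task $e$ with read set $R$ and write set $W$ (finite, disjoint variable sets), written $e(R,W)$, is a relation $e\subseteq \mathrm{Dom}(R)\times\mathrm{Dom}(W)$ that is total: for all $r\in\mathrm{Dom}(R)$ there is $w\in\mathrm{Dom}(W)$ with $(r,w)\in e$. A directed hypergraph $(V,E)$ has hyperedges $e$ with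 a source vertex set $\mathrm{In}(e)$ and a target vertex set $\mathrm{Out}(e)$; a vertex $v$ is initial if $v\notin\mathrm{Out}(e)$ for all $e\in E$. A task hypergraph (TG) is a directed hypergraph whose vertices are variables and whose hyperedges are tasks, such that (i) it is acyclic, (ii) no vertex is isolated, (iii) each vertex is in $\mathrm{Out}(e)$ for at most one $e$, and (iv) for each task $e(R_e,W_e)\in E$, $\mathrm{In}(e)=R_e$ and $\mathrm{Out}(e)=W_e$. $\mathrm{TG}(R,W)$ denotes the set of all relations obtained from TGs as in the claim. *)

theory Defs
  imports Main "HOL-Library.FuncSet"
begin

text \<open>Variables have type 'v, values live in a common universe 'val; the function
  tydom assigns to every variable the domain of its type.  An element of Dom(V) is
  an extensional assignment (undefined outside V); Dom({}) is a singleton.\<close>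

definition Dom :: "('v \<Rightarrow> 'val set) \<Rightarrow> 'v set \<Rightarrow> ('v \<Rightarrow> 'val) set" where
  "Dom tydom V = (\<Pi>\<^sub>E x\<in>V. tydom x)"

type_synonym ('v, 'val) task = "'v set \<times> 'v set \<times> (('v \<Rightarrow> 'val) \<times> ('v \<Rightarrow> 'val)) set"

definition reads :: "('v, 'val) task \<Rightarrow> 'v set" where "reads e = fst e"
definition writes :: "('v, 'val) task \<Rightarrow> 'v set" where "writes e = fst (snd e)"
definition rel :: "('v, 'val) task \<Rightarrow> (('v \<Rightarrow> 'val) \<times> ('v \<Rightarrow> 'val)) set" where
  "rel e = snd (snd e)"

definition is_task :: "('v \<Rightarrow> 'val set) \<Rightarrow> ('v, 'val) task \<Rightarrow> bool" where
  "is_task tydom e \<longleftrightarrow>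
     finite (reads e) \<and> finite (writes e) \<and> reads e \<inter> writes e = {} \<and>
     rel e \<subseteq> Dom tydom (reads e) \<times> Dom tydom (writes e) \<and>
     (\<forall>r\<in>Dom tydom (reads e). \<exists>w\<in>Dom tydom (writes e). (r, w) \<in> rel e)"

definition hg_edges :: "('v, 'val) task set \<Rightarrow> ('v \<times> 'v) set" where
  "hg_edges E = {(u, v). \<exists>e\<in>E. u \<in> reads e \<and> v \<in> writes e}"

definition task_hypergraph :: "('v \<Rightarrow> 'val set) \<Rightarrow> 'v set \<Rightarrow> ('v, 'val) task set \<Rightarrow> bool" where
  "task_hypergraph tydom V E \<longleftrightarrow>
     finite V \<and> finite E \<and>
     (\<forall>e\<in>E. is_task tydom e \<and> reads e \<subseteq> V \<and> writes e \<subseteq> V) \<and>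
     acyclic (hg_edges E) \<and>
     (\<forall>v\<in>V. \<exists>e\<in>E. v \<in> reads e \<union> writes e) \<and>
     (\<forall>v\<in>V. \<forall>e1\<in>E. \<forall>e2\<in>E. v \<in> writes e1 \<longrightarrow> v \<in> writes e2 \<longrightarrow> e1 = e2)"

definition initial_vertices :: "'v set \<Rightarrow> ('v, 'val) task set \<Rightarrow> 'v set" where
  "initial_vertices V E = {v\<in>V. \<forall>e\<in>E. v \<notin> writes e}"

text \<open>The relation of TG(R,W): r and w are related iff some assignment of all
  vertices (i.e. of the remaining vertices v_1..v_m) extends them and satisfies every task.\<close>
definition tg_rel :: "('v \<Rightarrow> 'val set) \<Rightarrow> 'v set \<Rightarrow> ('v, 'val) task set \<Rightarrow> 'v set \<Rightarrow> 'v set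
    \<Rightarrow> (('v \<Rightarrow> 'val) \<times> ('v \<Rightarrow> 'val)) set" where
  "tg_rel tydom V E R W =
     {(r, w). r \<in> Dom tydom R \<and> w \<in> Dom tydom W \<and>
        (\<exists>\<sigma>\<in>Dom tydom V. restrict \<sigma> R = r \<and> restrict \<sigma> W = w \<and>
           (\<forall>e\<in>E. (restrict \<sigma> (reads e), restrict \<sigma> (writes e)) \<in> rel e))}"

end

theory Submission
  imports Defs
begin

lemma source_exists:
  fixes E F :: "('v, 'val) task set"
  assumes fin: "finite E" and tk: "\<forall>e\<in>E. is_task tydom e" and ac: "acyclic (hg_edges E)"
    and sub: "F \<subseteq> E" and ne: "F \<noteq> {}"
  shows "\<exists>e\<in>F. reads e \<inter> \<Union>(writes ` F) = {}"
proof (cases "\<Union>(writes ` F) = {}")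
  case True then show ?thesis using ne by auto
next
  case False
  have "hg_edges E \<subseteq> \<Union>(reads ` E) \<times> \<Union>(writes ` E)"
    unfolding hg_edges_def by auto
  moreover have "finite (\<Union>(reads ` E) \<times> \<Union>(writes ` E))"
    using fin tk by (auto simp: is_task_def)
  ultimately have "finite (hg_edges E)" by (rule finite_subset)
  then have wf: "wf (hg_edges E)" using ac finite_acyclic_wf by blast
  obtain v where v: "v \<in> \<Union>(writes ` F)" and mn: "\<And>y. (y, v) \<in> hg_edges E \<Longrightarrow> y \<notin> \<Union>(writes ` F)"
    using wfE_min[OF wf, of v' "\<Union>(writes ` F)" for v'] False by blast
  then obtain e where e: "e \<in> F" "v \<in> writes e" by auto
  have "reads e \<inter> \<Union>(writes ` F) = {}"
  proof (rule ccontr)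
    assume "reads e \<inter> \<Union>(writes ` F) \<noteq> {}"
    then obtain u where u: "u \<in> reads e" "u \<in> \<Union>(writes ` F)" by auto
    have "(u, v) \<in> hg_edges E" using u e sub unfolding hg_edges_def by auto
    then show False using mn u by blast
  qed
  then show ?thesis using e by blast
qed

lemma gen:
  fixes E :: "('v, 'val) task set"
  assumes fin: "finite E" and tk: "\<forall>e\<in>E. is_task tydom e" and ac: "acyclic (hg_edges E)"
    and fnc: "\<forall>e1\<in>E. \<forall>e2\<in>E. writes e1 \<inter> writes e2 \<noteq> {} \<longrightarrow> e1 = e2"
  shows "F \<subseteq> E \<Longrightarrow> (\<forall>v\<in>\<Union>(reads ` F) - \<Union>(writes ` F). \<sigma>0 v \<in> tydom v) \<Longrightarrow>
    \<exists>\<sigma>. (\<forall>v. v \<notin> \<Union>(writes ` F) \<longrightarrow> \<sigma> v = \<sigma>0 v) \<and>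
        (\<forall>v\<in>\<Union>(writes ` F). \<sigma> v \<in> tydom v) \<and>
        (\<forall>e\<in>F. (restrict \<sigma> (reads e), restrict \<sigma> (writes e)) \<in> rel e)"
proof (induction "card F" arbitrary: F \<sigma>0 rule: less_induct)
  case less
  show ?case
  proof (cases "F = {}")
    case True then show ?thesis by auto
  next
    case False
    obtain e where e: "e \<in> F" and src: "reads e \<inter> \<Union>(writes ` F) = {}"
      using source_exists[OF fin tk ac less.prems(1) False] by blast
    have eE: "e \<in> E" using e less.prems(1) by auto
    have te: "is_task tydom e" using tk eE by auto
    have "restrict \<sigma>0 (reads e) \<in> Dom tydom (reads e)"
      using less.prems(2) e src unfolding Dom_def by auto
    then obtain w where w: "w \<in> Dom tydom (writes e)"
      and wr: "(restrict \<sigma>0 (reads e), w) \<in> rel e"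
      using te unfolding is_task_def by blast
    define \<sigma>1 where "\<sigma>1 = (\<lambda>v. if v \<in> writes e then w v else \<sigma>0 v)"
    define F' where "F' = F - {e}"
    have finF: "finite F" using fin less.prems(1) finite_subset by blast
    have card: "card F' < card F" unfolding F'_def using e finF
      by (meson card_Diff1_less)
    have F'E: "F' \<subseteq> E" using less.prems(1) F'_def by auto
    have wF: "\<Union>(writes ` F) = writes e \<union> \<Union>(writes ` F')" using e F'_def by auto
    have disj: "writes e \<inter> \<Union>(writes ` F') = {}"
      using fnc eE F'E unfolding F'_def by blast
    have h2: "\<forall>v\<in>\<Union>(reads ` F') - \<Union>(writes ` F'). \<sigma>1 v \<in> tydom v"
    proof
      fix v assume v: "v \<in> \<Union>(reads ` F') - \<Union>(writes ` F')"
      show "\<sigma>1 v \<in> tydom v"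
      proof (cases "v \<in> writes e")
        case True then show ?thesis using w unfolding \<sigma>1_def Dom_def by auto
      next
        case False
        then have "v \<in> \<Union>(reads ` F) - \<Union>(writes ` F)" using v wF F'_def by auto
        then show ?thesis using less.prems(2) False unfolding \<sigma>1_def by auto
      qed
    qed
    obtain \<sigma> where s1: "\<forall>v. v \<notin> \<Union>(writes ` F') \<longrightarrow> \<sigma> v = \<sigma>1 v"
      and s2: "\<forall>v\<in>\<Union>(writes ` F'). \<sigma> v \<in> tydom v"
      and s3: "\<forall>e\<in>F'. (restrict \<sigma> (reads e), restrict \<sigma> (writes e)) \<in> rel e"
      using less.hyps[OF card F'E h2] by blast
    have rd: "reads e \<inter> writes e = {}" using te unfolding is_task_def by auto
    have A: "restrict \<sigma> (reads e) = restrict \<sigma>0 (reads e)"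
    proof
      fix x show "restrict \<sigma> (reads e) x = restrict \<sigma>0 (reads e) x"
        proof (cases "x \<in> reads e")
        case True
        then have "x \<notin> \<Union>(writes ` F')" "x \<notin> writes e" using src rd wF by auto
        then show ?thesis using True s1 unfolding \<sigma>1_def by (simp add: restrict_def)
      qed (simp add: restrict_def)
    qed
    have B: "restrict \<sigma> (writes e) = w"
    proof
      fix x show "restrict \<sigma> (writes e) x = w x"
        proof (cases "x \<in> writes e")
        case True
        then have "x \<notin> \<Union>(writes ` F')" using disj by blast
        then show ?thesis using True s1 unfolding \<sigma>1_def by (simp add: restrict_def)
      next
        case False then show ?thesis using w unfolding Dom_def by (simp add: restrict_def PiE_def extensional_def)
      qed
    qed
    show ?thesis
    proof (intro exI conjI)
      show "\<forall>v. v \<notin> \<Union>(writes ` F) \<longrightarrow> \<sigma> v = \<sigma>0 v"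
        using s1 wF unfolding \<sigma>1_def by auto
      show "\<forall>v\<in>\<Union>(writes ` F). \<sigma> v \<in> tydom v"
      proof
        fix v assume "v \<in> \<Union>(writes ` F)"
        then consider "v \<in> writes e" | "v \<in> \<Union>(writes ` F')" using wF by auto
        then show "\<sigma> v \<in> tydom v"
        proof cases
          case 1
          then have "v \<notin> \<Union>(writes ` F')" using disj by blast
          then have "\<sigma> v = w v" using 1 s1 unfolding \<sigma>1_def by simp
          then show ?thesis using 1 w unfolding Dom_def by auto
        next
          case 2 then show ?thesis using s2 by auto
        qed
      qed
      show "\<forall>e\<in>F. (restrict \<sigma> (reads e), restrict \<sigma> (writes e)) \<in> rel e"
        using s3 A B wr F'_def by auto
    qed
  qed
qed

theorem lemma1:
  fixes tydom :: "'v \<Rightarrow> 'val set" and V :: "'v set" and E :: "('v, 'val) task set"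
    and R W :: "'v set"
  assumes "task_hypergraph tydom V E"
    and "R = initial_vertices V E"
    and "W \<subseteq> V - R"
  shows "\<forall>r\<in>Dom tydom R. \<exists>w\<in>Dom tydom W. (r, w) \<in> tg_rel tydom V E R W"
proof
  fix r assume r: "r \<in> Dom tydom R"
  have fin: "finite E" and tk: "\<forall>e\<in>E. is_task tydom e" and ac: "acyclic (hg_edges E)"
    and sV: "\<forall>e\<in>E. reads e \<subseteq> V \<and> writes e \<subseteq> V"
    and fn0: "\<forall>v\<in>V. \<forall>e1\<in>E. \<forall>e2\<in>E. v \<in> writes e1 \<longrightarrow> v \<in> writes e2 \<longrightarrow> e1 = e2"
    using assms(1) unfolding task_hypergraph_def by auto
  have fn: "\<forall>e1\<in>E. \<forall>e2\<in>E. writes e1 \<inter> writes e2 \<noteq> {} \<longrightarrow> e1 = e2"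
    using fn0 sV by blast
  have RV: "R = V - \<Union>(writes ` E)" using assms(2) unfolding initial_vertices_def by auto
  have h: "\<forall>v\<in>\<Union>(reads ` E) - \<Union>(writes ` E). r v \<in> tydom v"
  proof
    fix v assume v: "v \<in> \<Union>(reads ` E) - \<Union>(writes ` E)"
    then have "v \<in> R" using sV RV by blast
    then show "r v \<in> tydom v" using r unfolding Dom_def by auto
  qed
  obtain \<sigma> where s1: "\<forall>v. v \<notin> \<Union>(writes ` E) \<longrightarrow> \<sigma> v = r v"
      and s2: "\<forall>v\<in>\<Union>(writes ` E). \<sigma> v \<in> tydom v"
      and s3: "\<forall>e\<in>E. (restrict \<sigma> (reads e), restrict \<sigma> (writes e)) \<in> rel e"
    using gen[OF fin tk ac fn, of E r] h by blast
  define \<tau> where "\<tau> = restrict \<sigma> V"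
  have tV: "\<tau> \<in> Dom tydom V"
  proof -
    have "\<sigma> x \<in> tydom x" if x: "x \<in> V" for x
    proof (cases "x \<in> \<Union>(writes ` E)")
      case True then show ?thesis using s2 by blast
    next
      case False
      then have "x \<in> R" using x RV by blast
      then show ?thesis using False s1 r unfolding Dom_def by auto
    qed
    then show ?thesis unfolding Dom_def \<tau>_def by auto
  qed
  have tR: "restrict \<tau> R = r"
  proof
    fix x show "restrict \<tau> R x = r x"
      using s1 r RV unfolding \<tau>_def Dom_def by (auto simp: restrict_def PiE_def extensional_def)
  qed
  define w where "w = restrict \<tau> W"
  have wD: "w \<in> Dom tydom W" using tV assms(3) unfolding w_def Dom_def by (auto simp: PiE_def Pi_def)
  have tE: "\<forall>e\<in>E. (restrict \<tau> (reads e), restrict \<tau> (writes e)) \<in> rel e"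
  proof
    fix e assume e: "e \<in> E"
    have "restrict \<tau> (reads e) = restrict \<sigma> (reads e)" "restrict \<tau> (writes e) = restrict \<sigma> (writes e)"
      using sV e unfolding \<tau>_def by (auto simp: restrict_def fun_eq_iff)
    then show "(restrict \<tau> (reads e), restrict \<tau> (writes e)) \<in> rel e" using s3 e by simp
  qed
  show "\<exists>w\<in>Dom tydom W. (r, w) \<in> tg_rel tydom V E R W"
    using wD r tV tR tE unfolding tg_rel_def w_def by blast
qed

end
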